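(* Let $\lambda>0$ and $0<\sigma<2\lambda+1$. Then \[ A_\sigma^\lambda\left(\frac{1}{(1-x^2)^{\lambda/2+(1-\sigma)/4}}\right)=\frac{Q_{\sigma,\lambda}}{(1-x^2)^{\lambda/2+(1+\sigma)/4}}, \qquad Q_{\sigma,\lambda}=2^\sigma\frac{\Gamma\!\left(\frac{\lambda}{2}+\frac{1+\sigma}{4}\right)^2}{\Gamma\!\left(\frac{\lambda}{2}+\frac{1-\sigma}{4}\right)^2}, \] in the sense that, writing $g(x)=(1-x^2)^{-\lambda/2-(1-\sigma)/4}$ and $h(x)=(1-x^2)^{-\lambda/2-(1+\sigma)/4}$, for every $n\ge0$ \[ \frac{\Gamma(n+\lambda+\frac{1+\sigma}{2})}{\Gamma(n+\lambda+\frac{1-\sigma}{2})}\,a_n^\lambda(g)=Q_{\sigma,\lambda}\,a_n^\lambda(h). \]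
   Context: For $\lambda>-1/2$ let $d\mu_\lambda(x)=(1-x^2)^{\lambda-1/2}\,dx$ on $(-1,1)$. Let $C_n^\lambda$ be the ultraspherical (Gegenbauer) polynomial of degree $n$ and order $\lambda$, and $c_n^\lambda=C_n^\lambda/\|C_n^\lambda\|_{L^2(d\mu_\lambda)}$. For a function $f$ integrable against polynomials with respect to $d\mu_\lambda$ put $a_n^\lambda(f)=\int_{-1}^1 f(y)c_n^\lambda(y)\,d\mu_\lambda(y)$ (both $g$ and $h$ are integrable with respect to $d\mu_\lambda$ under the hypotheses). The operator $A_\sigma^\lambda$ acts on ultraspherical expansions by multiplying the $n$-th coefficient by $\frac{\Gamma(n+\lambda+\frac{1+\sigma}{2})}{\Gamma(n+\lambda+\frac{1-\sigma}{2})}$, i.e. $A_\sigma^\lambda f=\sum_{n\ge0}\frac{\Gamma(n+\lambda+\frac{1+\sigma}{2})}{\Gamma(n+\lambda+\frac{1-\sigma}{2})}a_n^\lambda(f)c_n^\lambda$. *)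

theory Defs
  imports "HOL-Analysis.Analysis"
begin

definition uweight :: "real \<Rightarrow> real \<Rightarrow> real" where
  "uweight lam x = (1 - x\<^sup>2) powr (lam - 1/2)"

text \<open>Gegenbauer polynomial C_n^lambda via the standard explicit formula
  C_n^lam(x) = sum_{k=0}^{n div 2} (-1)^k (lam)_{n-k} / (k! (n-2k)!) (2x)^(n-2k),
  equivalently the coefficients of the generating function (1-2xt+t^2)^(-lam).\<close>
definition gegenbauer :: "real \<Rightarrow> nat \<Rightarrow> real \<Rightarrow> real" where
  "gegenbauer lam n x =
     (\<Sum>k\<le>n div 2. (-1)^k * pochhammer lam (n - k) / (fact k * fact (n - 2*k))
                     * (2*x)^(n - 2*k))"

definition gegenbauer_norm :: "real \<Rightarrow> nat \<Rightarrow> real" where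
  "gegenbauer_norm lam n =
     sqrt (LBINT y:{-1<..<1}. (gegenbauer lam n y)\<^sup>2 * uweight lam y)"

definition gegenbauer_normalized :: "real \<Rightarrow> nat \<Rightarrow> real \<Rightarrow> real" where
  "gegenbauer_normalized lam n x = gegenbauer lam n x / gegenbauer_norm lam n"

definition ucoeff :: "real \<Rightarrow> nat \<Rightarrow> (real \<Rightarrow> real) \<Rightarrow> real" where
  "ucoeff lam n f =
     (LBINT y:{-1<..<1}. f y * gegenbauer_normalized lam n y * uweight lam y)"

end

theory Submission
  imports Defs
begin

lemma sq_powr_aux:
  fixes x :: real assumes "x > 0"
  shows "(x^2) powr (real j - 1/2) * x = x^(2*j)"
proof -
  have "x = (x^2) powr (1/2)" using assms by (simp add: powr_half_sqrt)
  hence "(x^2) powr (real j - 1/2) * x = (x^2) powr (real j - 1/2) * (x^2) powr (1/2)" by simp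
  also have "\<dots> = (x^2) powr ((real j - 1/2) + 1/2)" by (rule powr_add[symmetric])
  also have "\<dots> = (x^2) powr (real j)" by simp
  also have "\<dots> = (x^2)^j" using assms by (simp add: powr_realpow)
  finally show ?thesis by (simp add: power_mult)
qed

lemma evpow_nonneg: "0 \<le> (x::real)^(j*2)" "0 \<le> (x::real)^(2*j)"
  by (metis mult.commute power_mult zero_le_power2 zero_le_power)+

lemma moment_nn:
  fixes a :: real assumes a: "a > -1"
  shows "(\<integral>\<^sup>+x. ennreal ((1 - x\<^sup>2) powr a * x^(2*j) * indicator {-1..1} x) \<partial>lborel) =
      ennreal (Beta (real j + 1/2) (a + 1))"
proof -
  have "((\<lambda>t. t powr (real j - 1/2) * (1 - t) powr a) has_integral
          Beta (real j + 1/2) (a + 1)) {0..1}"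
    using has_integral_Beta_real[of "real j + 1/2" "a + 1"] a by simp
  from nn_integral_has_integral_lebesgue[OF _ this] have
     "ennreal (Beta (real j + 1/2) (a + 1)) =
        nn_integral lborel (\<lambda>t. ennreal (t powr (real j - 1/2) * (1 - t) powr a *
                                indicator {0^2..1^2} t))"
    by (simp add: mult_ac ennreal_mult' ennreal_indicator)
  also have "\<dots> = (\<integral>\<^sup>+ x. ennreal ((x\<^sup>2) powr (real j - 1/2) * (1 - x\<^sup>2) powr a * (2 * x) *
                          indicator {0..1} x) \<partial>lborel)"
    by (subst nn_integral_substitution[where g = "\<lambda>x. x ^ 2" and g' = "\<lambda>x. 2 * x"])
       (auto intro!: derivative_eq_intros continuous_intros simp: set_borel_measurable_def)
  also have "\<dots> = (\<integral>\<^sup>+ x. 2 * ennreal ((1 - x\<^sup>2) powr a * x^(2*j) * indicator {0..1} x) \<partial>lborel)"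
  proof -
    have pw: "ennreal ((x\<^sup>2) powr (real j - 1/2) * (1 - x\<^sup>2) powr a * (2 * x) * indicator {0..1} x) =
          2 * ennreal ((1 - x\<^sup>2) powr a * x^(2*j) * indicator {0..1} x)" if x0: "x \<noteq> 0" for x :: real
    proof -
    show "ennreal ((x\<^sup>2) powr (real j - 1/2) * (1 - x\<^sup>2) powr a * (2 * x) * indicator {0..1} x) =
          2 * ennreal ((1 - x\<^sup>2) powr a * x^(2*j) * indicator {0..1} x)"
    proof (cases "x \<in> {0..1}")
      case True
      hence "x > 0" using x0 by auto
      from sq_powr_aux[OF this, of j] have
        "(x\<^sup>2) powr (real j - 1/2) * (1 - x\<^sup>2) powr a * (2 * x) = 2 * ((1 - x\<^sup>2) powr a * x^(2*j))"
        by (simp add: algebra_simps)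
      hence "(x\<^sup>2) powr (real j - 1/2) * (1 - x\<^sup>2) powr a * (2 * x) * indicator {0..1} x
          = 2 * ((1 - x\<^sup>2) powr a * x^(2*j) * indicator {0..1} x)" using True by simp
      thus ?thesis by (simp only:) (simp add: ennreal_mult)
    qed simp
    qed
    show ?thesis by (intro nn_integral_cong_AE AE_I[of _ _ "{0}"]) (use pw in auto)
  qed
  also have "\<dots> = (\<integral>\<^sup>+ x. ennreal ((1 - x\<^sup>2) powr a * x^(2*j) * indicator {0..1} x) \<partial>lborel) +
                    (\<integral>\<^sup>+ x. ennreal ((1 - x\<^sup>2) powr a * x^(2*j) * indicator {0..1} x) \<partial>lborel)"
    (is "_ = ?I + _") by (simp add: mult_2 nn_integral_add)
  also have "?I = (\<integral>\<^sup>+ x. ennreal ((1 - x\<^sup>2) powr a * x^(2*j) * indicator {-1..0} x) \<partial>lborel)"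
    by (subst nn_integral_real_affine[of _ "-1" 0])
       (auto simp: indicator_def intro!: nn_integral_cong)
  hence "?I + ?I = \<dots> + ?I" by simp
  also have "\<dots> = (\<integral>\<^sup>+ x. ennreal ((1 - x\<^sup>2) powr a * x^(2*j) *
                    (indicator {-1..0} x + indicator{0..1} x)) \<partial>lborel)"
  proof (subst nn_integral_add [symmetric])
    show "(\<integral>\<^sup>+ x. ennreal ((1 - x\<^sup>2) powr a * x ^ (2 * j) * indicator {- 1..0} x) +
               ennreal ((1 - x\<^sup>2) powr a * x ^ (2 * j) * indicator {0..1} x) \<partial>lborel) =
         (\<integral>\<^sup>+ x. ennreal ((1 - x\<^sup>2) powr a * x ^ (2 * j) * (indicator {- 1..0} x + indicator {0..1} x)) \<partial>lborel)"
      by (intro nn_integral_cong, subst ennreal_plus[symmetric]) (simp_all add: evpow_nonneg algebra_simps)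
  qed auto
  also have "\<dots> = (\<integral>\<^sup>+ x. ennreal ((1 - x\<^sup>2) powr a * x^(2*j) * indicator {-1..1} x) \<partial>lborel)"
    by (intro nn_integral_cong_AE AE_I[of _ _ "{0}"]) (auto simp: indicator_def)
  finally show ?thesis ..
qed

lemma moment:
  fixes a :: real assumes a: "a > -1"
  shows "set_integrable lborel {-1<..<1} (\<lambda>x. (1 - x\<^sup>2) powr a * x^(2*j))"
    and "(LBINT x:{-1<..<1}. (1 - x\<^sup>2) powr a * x^(2*j)) = Beta (real j + 1/2) (a + 1)"
proof -
  let ?f = "\<lambda>x. indicator {-1<..<1} x *\<^sub>R ((1 - x\<^sup>2) powr a * x^(2*j))"
  have eq: "(1 - x\<^sup>2) powr a * x^(2*j) * indicator {-1..1} x = ?f x" for x :: real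
  proof (cases "x = 1 \<or> x = -1")
    case True
    hence "1 - x\<^sup>2 = 0" by (auto simp: power2_eq_square)
    thus ?thesis by simp
  next
    case False
    hence "indicator {-1..1} x = (indicator {-1<..<1} x :: real)" by (auto simp: indicator_def)
    thus ?thesis by (simp add: mult.commute)
  qed
  have B0: "Beta (real j + 1/2) (a + 1) \<ge> 0" using a unfolding Beta_def
    by (intro divide_nonneg_pos mult_nonneg_nonneg) (simp_all add: less_imp_le)
  have hb: "has_bochner_integral lborel ?f (Beta (real j + 1/2) (a + 1))"
  proof (rule has_bochner_integral_nn_integral)
    show "?f \<in> borel_measurable lborel" by measurable
    show "AE x in lborel. 0 \<le> ?f x"
      by (intro AE_I2) (simp add: evpow_nonneg)
    show "(\<integral>\<^sup>+x. ennreal (?f x) \<partial>lborel) = ennreal (Beta (real j + 1/2) (a + 1))"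
      using moment_nn[OF a, of j] unfolding eq .
  qed (use B0 in auto)
  show "set_integrable lborel {-1<..<1} (\<lambda>x. (1 - x\<^sup>2) powr a * x^(2*j))"
    unfolding set_integrable_def using hb by (rule integrable.intros)
  show "(LBINT x:{-1<..<1}. (1 - x\<^sup>2) powr a * x^(2*j)) = Beta (real j + 1/2) (a + 1)"
    unfolding set_lebesgue_integral_def using hb by (rule has_bochner_integral_integral_eq)
qed

lemma odd_set_integral_zero:
  fixes g :: "real \<Rightarrow> real"
  assumes odd: "\<And>x. g (-x) = - g x"
  shows "(LBINT x:{-1<..<1}. g x) = 0"
proof -
  have "(LBINT x:{-1<..<1}. g x) = (LBINT x:{x. - x \<in> {-1<..<1}}. g (- x))"
    by (rule set_integral_reflect)
  also have "{x::real. - x \<in> {-1<..<1}} = {-1<..<1}" by auto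
  also have "(LBINT x:{-1<..<1}. g (- x)) = - (LBINT x:{-1<..<1}. g x)"
    unfolding set_lebesgue_integral_def odd by simp
  finally show ?thesis by simp
qed

lemma gegenbauer_parity:
  "gegenbauer lam n (-x) = (-1)^n * gegenbauer lam n x"
  unfolding gegenbauer_def sum_distrib_left
proof (rule sum.cong[OF refl])
  fix k assume "k \<in> {..n div 2}"
  hence k: "2*k \<le> n" by auto
  have "(2 * - x) ^ (n - 2*k) = ((-1) * (2*x))^(n - 2*k)" by simp
  also have "\<dots> = (-1)^(n - 2*k) * (2*x)^(n-2*k)" by (rule power_mult_distrib)
  also have "(-1::real)^(n - 2*k) = (-1)^n"
  proof -
    have e: "(n-2*k) + 2*k = n" using k by simp
    have "(-1::real)^((n-2*k) + 2*k) = (-1)^(n - 2*k) * (-1)^(2*k)" by (rule power_add)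
    hence "(-1::real)^n = (-1)^(n - 2*k) * (-1)^(2*k)" by (simp only: e)
    thus ?thesis by (simp add: power_mult)
  qed
  finally show "(- 1) ^ k * pochhammer lam (n - k) / (fact k * fact (n - 2 * k)) * (2 * - x) ^ (n - 2 * k) =
         (- 1) ^ n * ((- 1) ^ k * pochhammer lam (n - k) / (fact k * fact (n - 2 * k)) * (2 * x) ^ (n - 2 * k))"
    by simp
qed

lemma pos_not_nonpos_Ints: "(x::real) > 0 \<Longrightarrow> x \<notin> \<int>\<^sub>\<le>\<^sub>0"
  using nonpos_Ints_nonpos by fastforce

lemma Gamma_dup_real:
  fixes x :: real assumes "x > 0"
  shows "Gamma x * Gamma (x + 1/2) = 2 powr (1 - 2*x) * sqrt pi * Gamma (2*x)"
proof -
  have n1: "complex_of_real x \<notin> \<int>\<^sub>\<le>\<^sub>0" using assms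
    by (simp add: of_real_in_nonpos_Ints_iff pos_not_nonpos_Ints)
  have e: "complex_of_real x + 1/2 = complex_of_real (x + 1/2)" by simp
  have "x + 1/2 \<notin> \<int>\<^sub>\<le>\<^sub>0" using assms by (intro pos_not_nonpos_Ints) simp
  hence "complex_of_real (x+1/2) \<notin> \<int>\<^sub>\<le>\<^sub>0" by (metis of_real_in_nonpos_Ints_iff)
  then have n2: "complex_of_real x + 1/2 \<notin> \<int>\<^sub>\<le>\<^sub>0" by (subst e)
  have "Gamma (complex_of_real x) * Gamma (complex_of_real x + 1/2) =
       exp ((1 - 2 * complex_of_real x) * of_real (ln 2)) * of_real (sqrt pi) * Gamma (2 * complex_of_real x)"
    by (rule Gamma_legendre_duplication[OF n1 n2])
  also have "exp ((1 - 2 * complex_of_real x) * of_real (ln 2)) = of_real (2 powr (1 - 2*x))"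
    by (simp add: powr_def exp_of_real[symmetric] mult.commute)
  finally have "complex_of_real (Gamma x * Gamma (x + 1/2)) = complex_of_real (2 powr (1 - 2*x) * sqrt pi * Gamma (2*x))"
    by (simp add: Gamma_complex_of_real[symmetric])
  thus ?thesis by (simp only: of_real_eq_iff)
qed

lemma final_alg:
  fixes uu vv sg PL :: real
  assumes uu: "uu > 0" and vv: "vv > 0" and sg: "sg = 2*uu - 2* vv"
  shows "Gamma (2 * real m + 2*uu) / Gamma (2 * real m + 2* vv) *
           (sqrt pi * Gamma uu * PL * pochhammer vv m / (fact m * Gamma (real m + uu + 1/2)))
       = (2 powr sg * (Gamma uu)\<^sup>2 / (Gamma vv)\<^sup>2) *
           (sqrt pi * Gamma vv * PL * pochhammer uu m / (fact m * Gamma (real m + vv + 1/2)))"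
proof -
  have nu: "uu \<notin> \<int>\<^sub>\<le>\<^sub>0" "vv \<notin> \<int>\<^sub>\<le>\<^sub>0" using uu vv nonpos_Ints_nonpos by fastforce+
  have pu: "pochhammer uu m = Gamma (uu + real m) / Gamma uu" using pochhammer_Gamma[OF nu(1)] by simp
  have pv: "pochhammer vv m = Gamma (vv + real m) / Gamma vv" using pochhammer_Gamma[OF nu(2)] by simp
  have du: "Gamma (real m + uu) * Gamma (real m + uu + 1/2) = 2 powr (1 - 2*(real m + uu)) * sqrt pi * Gamma (2*(real m + uu))"
    using Gamma_dup_real[of "real m + uu"] uu by simp
  have dv: "Gamma (real m + vv) * Gamma (real m + vv + 1/2) = 2 powr (1 - 2*(real m + vv)) * sqrt pi * Gamma (2*(real m + vv))"
    using Gamma_dup_real[of "real m + vv"] vv by simp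
  have gp: "Gamma uu > 0" "Gamma vv > 0" "Gamma (real m + uu) > 0" "Gamma (real m + vv) > 0"
     "Gamma (real m + uu + 1/2) > 0" "Gamma (real m + vv + 1/2) > 0" "Gamma (2 * real m + 2* vv) > 0"
     "Gamma (2 * real m + 2*uu) > 0" using uu vv by simp_all
  have e2u: "Gamma (2 * real m + 2*uu) = Gamma (real m + uu) * Gamma (real m + uu + 1/2) / (2 powr (1 - 2*(real m + uu)) * sqrt pi)"
    using du by (simp add: field_simps algebra_simps)
  have e2v: "Gamma (2 * real m + 2* vv) = Gamma (real m + vv) * Gamma (real m + vv + 1/2) / (2 powr (1 - 2*(real m + vv)) * sqrt pi)"
    using dv by (simp add: field_simps algebra_simps)
  have pw: "2 powr (1 - 2*(real m + vv)) = 2 powr sg * 2 powr (1 - 2*(real m + uu))"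
    unfolding sg by (simp add: powr_add[symmetric] algebra_simps)
  show ?thesis unfolding e2u e2v pu pv pw using gp
    by (simp add: field_simps power2_eq_square add.commute)
qed

lemma aux: "(x + 1/2) * (G::real) * 4 ^ Suc j / ((2*x + 2) * (2*x + 1) * F) =
   (G * 4 ^ j / F) * (4 * (x + 1/2) / ((2*x + 2) * (2 * x + 1)))"
  by (simp add: mult_ac)

lemma Gamma_half_fact:
  "Gamma (real j + 1/2) * 4 ^ j / fact (2*j) = sqrt pi / fact j"
proof (induction j)
  case 0 then show ?case by (simp add: Gamma_one_half_real)
next
  case (Suc j)
  have g: "Gamma (real (Suc j) + 1/2) = (real j + 1/2) * Gamma (real j + 1/2)"
    using Gamma_plus1[of "real j + 1/2"] pos_not_nonpos_Ints[of "real j + 1/2"] by (simp add: add_ac)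
  have f: "fact (2 * Suc j) = (2*real j + 2) * (2 * real j + 1) * (fact (2*j) :: real)"
    by (simp add: algebra_simps)
  have pos: "fact (2*j) > (0::real)" by simp
  have nz: "2*real j + 2 \<noteq> 0" "2*real j + 1 \<noteq> 0" by linarith+
  have "Gamma (real (Suc j) + 1/2) * 4 ^ Suc j / fact (2 * Suc j)
      = (Gamma (real j + 1/2) * 4 ^ j / fact (2*j)) * (4 * (real j + 1/2) / ((2*real j + 2) * (2 * real j + 1)))"
    unfolding g f by (rule aux)
  also have "(4 * (real j + 1/2) / ((2*real j + 2) * (2 * real j + 1))) = 1 / (real j + 1)"
  proof -
    have "real j * (real j * 8) \<ge> 0" by simp
    hence "4 + (real j * 12 + real j * (real j * 8)) \<noteq> 0" by (smt (verit) of_nat_0_le_iff)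
    thus ?thesis using nz by (simp add: field_simps)
  qed
  also have "Gamma (real j + 1/2) * 4 ^ j / fact (2*j) = sqrt pi / fact j" by (rule Suc.IH)
  also have "sqrt pi / fact j * (1 / (real j + 1)) = sqrt pi / fact (Suc j)"
    by (simp add: fact_Suc field_simps)
  finally show ?case .
qed


lemma vandermonde_gamma:
  fixes lam c :: real assumes c: "c > 0"
  shows "(\<Sum>k\<le>m. (-1)^k * pochhammer lam (2*m-k) / (fact k * fact (m-k) * Gamma (real (m-k) + c)))
       = pochhammer lam m * pochhammer (lam - c + 1) m / (fact m * Gamma (real m + c))"
proof -
  define P where "P = pochhammer lam m / (fact m * Gamma (real m + c))"
  have trm: "(-1)^k * pochhammer lam (2*m-k) / (fact k * fact (m-k) * Gamma (real (m-k) + c))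
     = P * (of_nat (m choose k) * pochhammer (1 - c - real m) k * pochhammer (lam + real m) (m - k))"
    if k: "k \<le> m" for k
  proof -
    have z: "real (m-k) + c > 0" using c by simp
    have G: "Gamma (real m + c) = Gamma (real (m-k) + c) * pochhammer (real (m-k) + c) k"
    proof -
      have e: "real (m-k) + c + of_nat k = real m + c" using k by (simp add: of_nat_diff)
      have "pochhammer (real (m-k) + c) k = Gamma (real m + c) / Gamma (real (m-k) + c)"
        using pochhammer_Gamma[OF pos_not_nonpos_Ints[OF z], of k] by (simp only: e)
      moreover have "Gamma (real (m-k) + c) \<noteq> 0" using Gamma_real_pos[OF z] by linarith
      ultimately show ?thesis by (simp add: field_simps)
    qed
    have M: "pochhammer (1 - c - real m) k = (-1)^k * pochhammer (real (m-k) + c) k"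
      using pochhammer_minus[of "c + real m - 1" k] k by (simp add: of_nat_diff algebra_simps)
    have B: "real (m choose k) = fact m / (fact k * fact (m - k))"
      using binomial_fact[OF k] by simp
    have PL: "pochhammer lam (2*m-k) = pochhammer lam m * pochhammer (lam + real m) (m-k)"
      using pochhammer_product'[of lam m "m-k"] k by (simp add: mult_2)
    have g0: "Gamma (real (m-k) + c) > 0" "Gamma (real m + c) > 0" using z c by simp_all
    have pp: "pochhammer (real (m-k) + c) k > 0" using z by (simp add: pochhammer_pos)
    show ?thesis unfolding P_def M B PL G using g0 pp
      by (simp add: field_simps)
  qed
  have "(\<Sum>k\<le>m. (-1)^k * pochhammer lam (2*m-k) / (fact k * fact (m-k) * Gamma (real (m-k) + c)))
      = (\<Sum>k\<le>m. P * (of_nat (m choose k) * pochhammer (1 - c - real m) k * pochhammer (lam + real m) (m - k)))"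
    by (rule sum.cong[OF refl], rule trm) simp
  also have "\<dots> = P * pochhammer ((1 - c - real m) + (lam + real m)) m"
    by (simp only: sum_distrib_left pochhammer_binomial_sum[of "1 - c - real m" "lam + real m" m])
  also have "(1 - c - real m) + (lam + real m) = lam - c + 1" by simp
  finally show ?thesis unfolding P_def by simp
qed


lemma set_integral_sum_real:
  fixes f :: "nat \<Rightarrow> real \<Rightarrow> real"
  assumes "\<And>i. i \<in> I \<Longrightarrow> set_integrable lborel A (f i)"
  shows "(LBINT x:A. (\<Sum>i\<in>I. f i x)) = (\<Sum>i\<in>I. LBINT x:A. f i x)"
  unfolding set_lebesgue_integral_def scaleR_sum_right
  by (rule Bochner_Integration.integral_sum[where f="\<lambda>i x. indicator A x *\<^sub>R f i x"]) (use assms in \<open>simp add: set_integrable_def\<close>)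

definition Jint :: "real \<Rightarrow> nat \<Rightarrow> real \<Rightarrow> real" where
  "Jint lam n b = (LBINT y:{-1<..<1}. (1 - y\<^sup>2) powr b * gegenbauer lam n y)"

lemma J_odd: "odd n \<Longrightarrow> Jint lam n b = 0"
  unfolding Jint_def
  by (rule odd_set_integral_zero) (simp add: gegenbauer_parity)

lemma term_alg:
  fixes G q s F fm fk H sg P Gb :: real
  assumes "G * q = s * F / fm" "F \<noteq> 0" "fk \<noteq> 0" "fm \<noteq> 0" "H \<noteq> 0"
  shows "sg * P / (fk * F) * q * (G * Gb / H) = s * Gb * (sg * P / (fk * fm * H))"
proof -
  have "sg * P / (fk * F) * q * (G * Gb / H) = sg * P * Gb / (fk * F * H) * (G * q)"
    by (simp add: field_simps)
  also have "\<dots> = sg * P * Gb / (fk * F * H) * (s * F / fm)" using assms(1) by simp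
  finally show ?thesis using assms(2-5) by (simp add: field_simps)
qed

lemma J_even:
  fixes b lam :: real assumes b: "b > -1"
  shows "Jint lam (2*m) b = sqrt pi * Gamma (b+1) * pochhammer lam m * pochhammer (lam - b - 1/2) m
            / (fact m * Gamma (real m + b + 3/2))"
proof -
  define cf where "cf k = ((-1)^k * pochhammer lam (2*m-k) / (fact k * fact (2*m - 2*k)) :: real)" for k
  have expand: "(1 - y\<^sup>2) powr b * gegenbauer lam (2*m) y =
      (\<Sum>k\<le>m. cf k * 4^(m-k) * ((1 - y\<^sup>2) powr b * y^(2*(m-k))))" for y :: real
    unfolding gegenbauer_def sum_distrib_left
  proof (rule sum.cong)
    show "{..2 * m div 2} = {..m}" by simp
    fix k assume "k \<in> {..m}"
    have e: "2*m - 2*k = 2*(m-k)" by simp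
    have "(2*y)^(2*m - 2*k) = 4^(m-k) * y^(2*(m-k))"
      unfolding e power_mult_distrib by (simp add: power_mult)
    thus "(1 - y\<^sup>2) powr b * ((- 1) ^ k * pochhammer lam (2 * m - k) / (fact k * fact (2 * m - 2 * k)) * (2 * y) ^ (2 * m - 2 * k)) =
         cf k * 4 ^ (m - k) * ((1 - y\<^sup>2) powr b * y ^ (2 * (m - k)))"
      unfolding cf_def by (simp add: mult_ac)
  qed
  have "Jint lam (2*m) b = (LBINT y:{-1<..<1}. (\<Sum>k\<le>m. cf k * 4^(m-k) * ((1 - y\<^sup>2) powr b * y^(2*(m-k)))))"
    unfolding Jint_def expand ..
  also have "\<dots> = (\<Sum>k\<le>m. LBINT y:{-1<..<1}. cf k * 4^(m-k) * ((1 - y\<^sup>2) powr b * y^(2*(m-k))))"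
    by (rule set_integral_sum_real) (intro set_integrable_mult_right moment(1)[OF b])
  also have "\<dots> = (\<Sum>k\<le>m. cf k * 4^(m-k) * Beta (real (m-k) + 1/2) (b + 1))"
    by (simp only: set_integral_mult_right moment(2)[OF b])
  also have "\<dots> = (\<Sum>k\<le>m. sqrt pi * Gamma (b+1) * ((-1)^k * pochhammer lam (2*m-k) /
        (fact k * fact (m-k) * Gamma (real (m-k) + (b + 3/2)))))"
  proof (rule sum.cong[OF refl])
    fix k assume "k \<in> {..m}"
    have e: "fact (2*m - 2*k) = (fact (2*(m-k)) :: real)" by (simp add: right_diff_distrib')
    have be: "Beta (real (m-k) + 1/2) (b + 1) = Gamma (real (m-k) + 1/2) * Gamma (b+1) / Gamma (real (m-k) + (b + 3/2))"
      unfolding Beta_def by (simp add: add_ac)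
    have H: "Gamma (real (m-k) + (b + 3/2)) \<noteq> 0"
    proof -
      have "real (m-k) + (b + 3/2) > 0" using b by simp
      thus ?thesis using Gamma_real_pos by (metis less_irrefl)
    qed
    show "cf k * 4^(m-k) * Beta (real (m-k) + 1/2) (b + 1) = sqrt pi * Gamma (b+1) * ((-1)^k * pochhammer lam (2*m-k) /
        (fact k * fact (m-k) * Gamma (real (m-k) + (b + 3/2))))"
    proof -
      have F0: "fact (2*(m-k)) \<noteq> (0::real)" by simp
      have "Gamma (real (m-k) + 1/2) * 4^(m-k) = (Gamma (real (m-k) + 1/2) * 4^(m-k) / fact (2*(m-k))) * fact (2*(m-k))"
        using F0 by simp
      also have "\<dots> = sqrt pi / fact (m-k) * fact (2*(m-k))" by (simp only: Gamma_half_fact)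
      finally have hf: "Gamma (real (m-k) + 1/2) * 4^(m-k) = sqrt pi * fact (2*(m-k)) / fact (m-k)" by simp
      show ?thesis unfolding cf_def e be
        by (rule term_alg[OF hf _ _ _ H]) simp_all
    qed
  qed
  also have "\<dots> = sqrt pi * Gamma (b+1) * (\<Sum>k\<le>m. (-1)^k * pochhammer lam (2*m-k) /
        (fact k * fact (m-k) * Gamma (real (m-k) + (b + 3/2))))"
    by (simp add: sum_distrib_left)
  also have "\<dots> = sqrt pi * Gamma (b+1) * (pochhammer lam m * pochhammer (lam - (b + 3/2) + 1) m / (fact m * Gamma (real m + (b + 3/2))))"
  proof -
    have cpos: "b + 3/2 > 0" using b by simp
    show ?thesis by (simp only: vandermonde_gamma[of "b+3/2" lam m, OF cpos])
  qed
  also have "lam - (b + 3/2) + 1 = lam - b - 1/2" by simp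
  also have "real m + (b + 3/2) = real m + b + 3/2" by simp
  finally show ?thesis by (simp only: times_divide_eq_right mult.assoc)
qed

lemma ucoeff_pow:
  "ucoeff lam n (\<lambda>x. (1 - x\<^sup>2) powr e) = Jint lam n (e + (lam - 1/2)) / gegenbauer_norm lam n"
proof -
  have "ucoeff lam n (\<lambda>x. (1 - x\<^sup>2) powr e) =
     (LBINT y:{-1<..<1}. (1 / gegenbauer_norm lam n) * ((1 - y\<^sup>2) powr (e + (lam - 1/2)) * gegenbauer lam n y))"
    unfolding ucoeff_def gegenbauer_normalized_def uweight_def
    by (rule set_lebesgue_integral_cong) (auto simp: powr_add)
  also have "\<dots> = Jint lam n (e + (lam - 1/2)) / gegenbauer_norm lam n"
    unfolding Jint_def set_integral_mult_right by simp
  finally show ?thesis .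
qed

theorem lemma2:
  fixes lam \<sigma> :: real
  assumes "lam > 0" and "0 < \<sigma>" and "\<sigma> < 2*lam + 1"
  shows "\<forall>n::nat.
    Gamma (real n + lam + (1 + \<sigma>)/2) / Gamma (real n + lam + (1 - \<sigma>)/2)
      * ucoeff lam n (\<lambda>x. (1 - x\<^sup>2) powr (- lam/2 - (1 - \<sigma>)/4))
    = (2 powr \<sigma> * (Gamma (lam/2 + (1 + \<sigma>)/4))\<^sup>2 / (Gamma (lam/2 + (1 - \<sigma>)/4))\<^sup>2)
      * ucoeff lam n (\<lambda>x. (1 - x\<^sup>2) powr (- lam/2 - (1 + \<sigma>)/4))"
proof
  fix n :: nat
  define uu where "uu = lam/2 + (1 + \<sigma>)/4"
  define vv where "vv = lam/2 + (1 - \<sigma>)/4"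
  have uu: "uu > 0" using assms unfolding uu_def by (simp add: field_simps)
  have vv: "vv > 0" using assms unfolding vv_def by (simp add: field_simps)
  have e1: "(- lam/2 - (1 - \<sigma>)/4) + (lam - 1/2) = uu - 1" by (simp add: uu_def field_simps)
  have e2: "(- lam/2 - (1 + \<sigma>)/4) + (lam - 1/2) = vv - 1" by (simp add: vv_def field_simps)
  define N where "N = gegenbauer_norm lam n"
  have U1: "ucoeff lam n (\<lambda>x. (1 - x\<^sup>2) powr (- lam/2 - (1 - \<sigma>)/4)) = Jint lam n (uu - 1) / N"
    unfolding ucoeff_pow e1 N_def ..
  have U2: "ucoeff lam n (\<lambda>x. (1 - x\<^sup>2) powr (- lam/2 - (1 + \<sigma>)/4)) = Jint lam n (vv - 1) / N"
    unfolding ucoeff_pow e2 N_def ..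
  have QQ: "(2 powr \<sigma> * (Gamma (lam/2 + (1 + \<sigma>)/4))\<^sup>2 / (Gamma (lam/2 + (1 - \<sigma>)/4))\<^sup>2)
      = 2 powr \<sigma> * (Gamma uu)\<^sup>2 / (Gamma vv)\<^sup>2" by (simp add: uu_def vv_def)
  show "Gamma (real n + lam + (1 + \<sigma>)/2) / Gamma (real n + lam + (1 - \<sigma>)/2)
      * ucoeff lam n (\<lambda>x. (1 - x\<^sup>2) powr (- lam/2 - (1 - \<sigma>)/4))
    = (2 powr \<sigma> * (Gamma (lam/2 + (1 + \<sigma>)/4))\<^sup>2 / (Gamma (lam/2 + (1 - \<sigma>)/4))\<^sup>2)
      * ucoeff lam n (\<lambda>x. (1 - x\<^sup>2) powr (- lam/2 - (1 + \<sigma>)/4))"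
  proof (cases "even n")
    case False
    thus ?thesis unfolding U1 U2 by (simp add: J_odd)
  next
    case True
    then obtain m where n: "n = 2*m" by blast
    have J1: "Jint lam n (uu - 1) = sqrt pi * Gamma uu * pochhammer lam m * pochhammer vv m / (fact m * Gamma (real m + uu + 1/2))"
    proof -
      have h: "uu - 1 > -1" using uu by simp
      have a1: "uu - 1 + 1 = uu" by simp
      have a2: "lam - (uu - 1) - 1/2 = vv" unfolding uu_def vv_def by (simp add: field_simps)
      have a3: "real m + (uu - 1) + 3/2 = real m + uu + 1/2" by simp
      show ?thesis unfolding n using J_even[OF h, of lam m] by (simp only: a1 a2 a3)
    qed
    have J2: "Jint lam n (vv - 1) = sqrt pi * Gamma vv * pochhammer lam m * pochhammer uu m / (fact m * Gamma (real m + vv + 1/2))"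
    proof -
      have h: "vv - 1 > -1" using vv by simp
      have a1: "vv - 1 + 1 = vv" by simp
      have a2: "lam - (vv - 1) - 1/2 = uu" unfolding uu_def vv_def by (simp add: field_simps)
      have a3: "real m + (vv - 1) + 3/2 = real m + vv + 1/2" by simp
      show ?thesis unfolding n using J_even[OF h, of lam m] by (simp only: a1 a2 a3)
    qed
    have g1: "real n + lam + (1 + \<sigma>)/2 = 2 * real m + 2 * uu" unfolding n uu_def by (simp add: field_simps)
    have g2: "real n + lam + (1 - \<sigma>)/2 = 2 * real m + 2 * vv" unfolding n vv_def by (simp add: field_simps)
    have key: "Gamma (2 * real m + 2*uu) / Gamma (2 * real m + 2 * vv) *
           (sqrt pi * Gamma uu * pochhammer lam m * pochhammer vv m / (fact m * Gamma (real m + uu + 1/2)))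
       = (2 powr \<sigma> * (Gamma uu)\<^sup>2 / (Gamma vv)\<^sup>2) *
           (sqrt pi * Gamma vv * pochhammer lam m * pochhammer uu m / (fact m * Gamma (real m + vv + 1/2)))"
      by (rule final_alg[OF uu vv]) (simp add: uu_def vv_def field_simps)
    have gen: "\<And>X A Y B M :: real. X * A = Y * B \<Longrightarrow> X * (A / M) = Y * (B / M)"
      by (metis times_divide_eq_right)
    show ?thesis unfolding U1 U2 QQ g1 g2 J1 J2 by (rule gen[OF key])
  qed
qed

end
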